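(* Let $G_1=(V,D_1)$ and $G_2=(V,D_2)$ be simple directed graphs on the same node set $V$, neither of which is complete. Suppose they have the same out-degree sequence, meaning $|\mathrm{ch}_1(v)|=|\mathrm{ch}_2(v)|$ for every $v\in V$, and that $D_1\neq D_2$. If one of the graphs is acyclic, then there exist $k\in\{1,2\}$, a node $i\in V$, and a set $L$ that is parentally closed with respect to $i$ in $G_k$ such that $|\mathrm{ch}_k(i)\cap L|>|\mathrm{ch}_{3-k}(i)\cap L|$.
   Context: A directed graph $G=(V,D)$ has edge set $D\subseteq V\times V$ of ordered pairs $(i,j)$, $i\neq j$. It is simple if $(i,j)$ and $(j,i)$ are never both in $D$. It is complete if every pair of distinct nodes is adjacent. $\mathrm{ch}_k(i)$ and $\mathrm{pa}_k(i)$ are the children and parents of $i$ in $G_k$, and $\mathrm{ne}_k(i)$ is the set of nodes adjacent to $i$ in $G_k$. For a set $L$ of nodes, $\mathrm{pa}_k(L)=\bigcup_{l\in L}\mathrm{pa}_k(l)$. A subset $L\subseteq\mathrm{ne}_k(i)$ is parentally closed with respect to $i$ in $G_k$ if $\mathrm{pa}_k(L)\cap\mathrm{ne}_k(i)\subseteq L$. *)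

theory Defs
  imports Main
begin

definition digraph :: "'a set \<Rightarrow> ('a \<times> 'a) set \<Rightarrow> bool" where
  "digraph V D \<longleftrightarrow> D \<subseteq> V \<times> V \<and> (\<forall>i j. (i, j) \<in> D \<longrightarrow> i \<noteq> j)"

definition simple_digraph :: "'a set \<Rightarrow> ('a \<times> 'a) set \<Rightarrow> bool" where
  "simple_digraph V D \<longleftrightarrow> digraph V D \<and> (\<forall>i j. (i, j) \<in> D \<longrightarrow> (j, i) \<notin> D)"

definition complete_digraph :: "'a set \<Rightarrow> ('a \<times> 'a) set \<Rightarrow> bool" where
  "complete_digraph V D \<longleftrightarrow> (\<forall>i\<in>V. \<forall>j\<in>V. i \<noteq> j \<longrightarrow> (i, j) \<in> D \<or> (j, i) \<in> D)"

definition ch :: "('a \<times> 'a) set \<Rightarrow> 'a \<Rightarrow> 'a set" where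
  "ch D i = {j. (i, j) \<in> D}"

definition pa :: "('a \<times> 'a) set \<Rightarrow> 'a \<Rightarrow> 'a set" where
  "pa D i = {j. (j, i) \<in> D}"

definition ne :: "('a \<times> 'a) set \<Rightarrow> 'a \<Rightarrow> 'a set" where
  "ne D i = ch D i \<union> pa D i"

definition pa_set :: "('a \<times> 'a) set \<Rightarrow> 'a set \<Rightarrow> 'a set" where
  "pa_set D L = (\<Union>l\<in>L. pa D l)"

definition parentally_closed :: "('a \<times> 'a) set \<Rightarrow> 'a \<Rightarrow> 'a set \<Rightarrow> bool" where
  "parentally_closed D i L \<longleftrightarrow> L \<subseteq> ne D i \<and> pa_set D L \<inter> ne D i \<subseteq> L"

end

theory Submission
  imports Defs
begin

lemma main_lemma:
  fixes V :: "'a set" and D1 D2 :: "('a \<times> 'a) set"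
  assumes fin: "finite V"
    and s1: "simple_digraph V D1" and s2: "simple_digraph V D2"
    and deg: "\<forall>v\<in>V. card (ch D1 v) = card (ch D2 v)"
    and neq: "D1 \<noteq> D2"
    and ac: "acyclic D1"
  shows "\<exists>i\<in>V. \<exists>L. parentally_closed D1 i L \<and> card (ch D1 i \<inter> L) > card (ch D2 i \<inter> L)"
proof -
  have sub1: "D1 \<subseteq> V \<times> V" and sub2: "D2 \<subseteq> V \<times> V"
    using s1 s2 unfolding simple_digraph_def digraph_def by auto
  define R where "R = D1 - D2"
  have Rne: "R \<noteq> {}"
  proof
    assume "R = {}"
    hence D12: "D1 \<subseteq> D2" unfolding R_def by auto
    have "D2 \<subseteq> D1"
    proof
      fix p assume p: "p \<in> D2"
      obtain a b where ab: "p = (a,b)" by (cases p)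
      have aV: "a \<in> V" using p ab sub2 by auto
      have "ch D1 a \<subseteq> ch D2 a" using D12 unfolding ch_def by auto
      moreover have "finite (ch D2 a)"
        using sub2 fin unfolding ch_def by (auto intro: finite_subset[of _ V])
      ultimately have "ch D1 a = ch D2 a" using deg aV card_subset_eq by metis
      thus "p \<in> D1" using p ab unfolding ch_def by auto
    qed
    with D12 neq show False by auto
  qed
  have finR: "finite R" using sub1 fin unfolding R_def
    by (meson Diff_subset finite_SigmaI finite_subset)
  have acR: "acyclic R" using ac acyclic_subset unfolding R_def by blast
  have wfR: "wf R" using finR acR finite_acyclic_wf by blast
  obtain x where "x \<in> Domain R" using Rne by auto
  then obtain i where iD: "i \<in> Domain R" and imin: "\<And>y. (y,i) \<in> R \<Longrightarrow> y \<notin> Domain R"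
    using wfR wf_eq_minimal[of R] by metis
  have noin: "\<And>y. (y,i) \<notin> R" using imin by blast
  obtain j where ij: "(i,j) \<in> R" using iD by auto
  have iV: "i \<in> V" using ij sub1 unfolding R_def by auto
  define L where "L = ne D1 i"
  have pc: "parentally_closed D1 i L" unfolding parentally_closed_def L_def by auto
  have ch1L: "ch D1 i \<inter> L = ch D1 i" unfolding L_def ne_def by auto
  have inc: "ch D2 i \<inter> L \<subseteq> ch D1 i \<inter> ch D2 i"
  proof
    fix y assume y: "y \<in> ch D2 i \<inter> L"
    hence y2: "(i,y) \<in> D2" unfolding ch_def by auto
    show "y \<in> ch D1 i \<inter> ch D2 i"
    proof (cases "(i,y) \<in> D1")
      case True thus ?thesis using y2 unfolding ch_def by auto
    next
      case False
      hence "(y,i) \<in> D1" using y unfolding L_def ne_def ch_def pa_def by auto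
      moreover have "(y,i) \<notin> D2" using y2 s2 unfolding simple_digraph_def by auto
      ultimately have "(y,i) \<in> R" unfolding R_def by auto
      thus ?thesis using noin by auto
    qed
  qed
  have fin1: "finite (ch D1 i)"
    using sub1 fin unfolding ch_def by (auto intro: finite_subset[of _ V])
  have "j \<in> ch D1 i" "j \<notin> ch D2 i" using ij unfolding R_def ch_def by auto
  hence "ch D1 i \<inter> ch D2 i \<subset> ch D1 i" by auto
  hence "card (ch D1 i \<inter> ch D2 i) < card (ch D1 i)" using fin1 psubset_card_mono by blast
  moreover have "card (ch D2 i \<inter> L) \<le> card (ch D1 i \<inter> ch D2 i)"
    using inc fin1 by (meson card_mono finite_Int)
  ultimately have "card (ch D2 i \<inter> L) < card (ch D1 i \<inter> L)" using ch1L by simp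
  thus ?thesis using pc iV by blast
qed

theorem theorem4p13:
  fixes V :: "'a set" and D1 D2 :: "('a \<times> 'a) set"
  assumes "finite V"
    and "simple_digraph V D1" and "simple_digraph V D2"
    and "\<not> complete_digraph V D1" and "\<not> complete_digraph V D2"
    and "\<forall>v\<in>V. card (ch D1 v) = card (ch D2 v)"
    and "D1 \<noteq> D2"
    and "acyclic D1 \<or> acyclic D2"
  shows "(\<exists>i\<in>V. \<exists>L. parentally_closed D1 i L \<and> card (ch D1 i \<inter> L) > card (ch D2 i \<inter> L))
       \<or> (\<exists>i\<in>V. \<exists>L. parentally_closed D2 i L \<and> card (ch D2 i \<inter> L) > card (ch D1 i \<inter> L))"
  using assms(8)
proof
  assume "acyclic D1"
  thus ?thesis using main_lemma[of V D1 D2] assms by blast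
next
  assume "acyclic D2"
  thus ?thesis using main_lemma[of V D2 D1] assms by (metis (no_types))
qed

end
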